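(* Let $G$ be an ample Hausdorff groupoid, let $R$ be a commutative unital ring with the discrete topology, let $T \le R^\times$, and let $\sigma\colon G^{(2)} \to T$ be a continuous $2$-cocycle. There is an $R$-algebra isomorphism $\Psi\colon A_R(G; G \times_\sigma T) \to A_R(G,\sigma^{-1})$ with $\Psi(f)(\gamma) = f(\gamma,1)$ for all $f \in A_R(G; G\times_\sigma T)$ and $\gamma \in G$, where $\sigma^{-1}(\alpha,\beta) := \sigma(\alpha,\beta)^{-1}$. If $R$ has a $T$-inverse involution, then $\Psi$ is a $*$-isomorphism.
   Context: Groupoids are locally compact Hausdorff topological groupoids; $G$ is ample if it has a basis of compact open bisections; $T$ has the discrete topology. A continuous $2$-cocycle $\omega\colon G^{(2)}\to T$ is continuous with $\omega(\alpha,\beta)\omega(\alpha\beta,\gamma) = \omega(\alpha,\beta\gamma)\omega(\beta,\gamma)$ and $\omega(r(\gamma),\gamma)=1=\omega(\gamma,s(\gamma))$. $G\times_\sigma T$ is $G\times T$ with product topology, multiplication $(\alpha,z)(\beta,w) = (\alpha\beta,\sigma(\alpha,\beta)zw)$, inverse $(\alpha,z)^{-1} = (\alpha^{-1},\sigma(\alpha,\alpha^{-1})^{-1}z^{-1})$, with $q(\gamma,z)=\gamma$; $T$ acts on it by $z\cdot(\alpha,w) = (\alpha,zw)$. $A_R(G;G\times_\sigma T)$ is the set of continuous $f\colon G\times_\sigma T\to R$ with $f(z\cdot\varepsilon) = zf(\varepsilon)$ and $\overline{q(\{f\neq0\})}$ compact, with pointwise module operations, multiplication $(f*g)(\varepsilon)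 = \sum_{\gamma\in G^{s(q(\varepsilon))}} f(\varepsilon S(\gamma))g(S(\gamma)^{-1})$ where $S(\gamma) = (\gamma,1)$, and (when $R$ has a $T$-inverse involution) involution $f^*(\varepsilon) = \overline{f(\varepsilon^{-1})}$. $A_R(G,\omega)$ is the $R$-module of locally constant compactly supported $f\colon G\to R$ with multiplication $(f*_\omega g)(\gamma) = \sum_{\alpha\beta=\gamma}\omega(\alpha,\beta)f(\alpha)g(\beta)$ and involution $f^*(\gamma) = \omega(\gamma,\gamma^{-1})^{-1}\overline{f(\gamma^{-1})}$. A $T$-inverse involution on $R$ is a ring involution $r\mapsto\overline r$ with $\overline z = z^{-1}$ for $z\in T$. *)

theory Defs
  imports "HOL-Analysis.Analysis"
begin

text \<open>A groupoid is represented by its structure maps on a type 'g whose elements are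
  the arrows of the groupoid; the topology of G is the type-class topology of 'g.\<close>

record 'g groupoid =
  rng :: "'g \<Rightarrow> 'g"
  src :: "'g \<Rightarrow> 'g"
  gmul :: "'g \<Rightarrow> 'g \<Rightarrow> 'g"
  ginv :: "'g \<Rightarrow> 'g"

definition composable :: "'g groupoid \<Rightarrow> ('g \<times> 'g) set"
  where "composable G = {(a, b). src G a = rng G b}"

definition units :: "'g groupoid \<Rightarrow> 'g set"
  where "units G = range (rng G)"

definition groupoid_axioms :: "'g groupoid \<Rightarrow> bool" where
  "groupoid_axioms G \<longleftrightarrow>
     (\<forall>a b. src G a = rng G b \<longrightarrow>
        rng G (gmul G a b) = rng G a \<and> src G (gmul G a b) = src G b) \<and>
     (\<forall>a b c. src G a = rng G b \<and> src G b = rng G c \<longrightarrow>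
        gmul G (gmul G a b) c = gmul G a (gmul G b c)) \<and>
     (\<forall>a. src G (rng G a) = rng G a \<and> rng G (src G a) = src G a) \<and>
     (\<forall>a. gmul G (rng G a) a = a \<and> gmul G a (src G a) = a) \<and>
     (\<forall>a. src G (ginv G a) = rng G a \<and> rng G (ginv G a) = src G a \<and>
          gmul G a (ginv G a) = rng G a \<and> gmul G (ginv G a) a = src G a)"

definition topological_groupoid :: "('g::topological_space) groupoid \<Rightarrow> bool" where
  "topological_groupoid G \<longleftrightarrow> groupoid_axioms G \<and>
     continuous_on (composable G) (\<lambda>(a, b). gmul G a b) \<and>
     continuous_on UNIV (ginv G)"

definition bisection :: "('g::topological_space) groupoid \<Rightarrow> 'g set \<Rightarrow> bool" where
  "bisection G B \<longleftrightarrow>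
     (\<exists>g. homeomorphism B (rng G ` B) (rng G) g) \<and>
     openin (top_of_set (units G)) (rng G ` B) \<and>
     (\<exists>g. homeomorphism B (src G ` B) (src G) g) \<and>
     openin (top_of_set (units G)) (src G ` B)"

definition ample_hausdorff_groupoid :: "('g::t2_space) groupoid \<Rightarrow> bool" where
  "ample_hausdorff_groupoid G \<longleftrightarrow> topological_groupoid G \<and>
     locally_compact_space (euclidean :: 'g topology) \<and>
     (\<forall>U x. open U \<and> x \<in> U \<longrightarrow>
        (\<exists>B. compact B \<and> open B \<and> bisection G B \<and> x \<in> B \<and> B \<subseteq> U))"

definition uinv :: "'r::comm_ring_1 \<Rightarrow> 'r" where
  "uinv x = (THE y. x * y = 1)"

definition subgroup_of_units :: "('r::comm_ring_1) set \<Rightarrow> bool" where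
  "subgroup_of_units T \<longleftrightarrow> 1 \<in> T \<and> (\<forall>a\<in>T. \<forall>b\<in>T. a * b \<in> T) \<and>
     (\<forall>a\<in>T. \<exists>b\<in>T. a * b = 1)"

text \<open>Continuity into a discrete space (= local constancy) on a subset S.\<close>
definition locally_constant_on :: "('a::topological_space) set \<Rightarrow> ('a \<Rightarrow> 'b) \<Rightarrow> bool" where
  "locally_constant_on S f \<longleftrightarrow>
     (\<forall>x\<in>S. \<exists>U. open U \<and> x \<in> U \<and> (\<forall>y\<in>U \<inter> S. f y = f x))"

definition continuous_2_cocycle ::
  "('g::topological_space) groupoid \<Rightarrow> ('r::comm_ring_1) set \<Rightarrow> ('g \<times> 'g \<Rightarrow> 'r) \<Rightarrow> bool" where
  "continuous_2_cocycle G T \<sigma> \<longleftrightarrow>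
     (\<forall>p\<in>composable G. \<sigma> p \<in> T) \<and>
     locally_constant_on (composable G) \<sigma> \<and>
     (\<forall>a b c. src G a = rng G b \<and> src G b = rng G c \<longrightarrow>
        \<sigma> (a, b) * \<sigma> (gmul G a b, c) = \<sigma> (a, gmul G b c) * \<sigma> (b, c)) \<and>
     (\<forall>g. \<sigma> (rng G g, g) = 1 \<and> \<sigma> (g, src G g) = 1)"

definition finsum :: "('a \<Rightarrow> 'r::comm_ring_1) \<Rightarrow> 'a set \<Rightarrow> 'r" where
  "finsum h S = sum h {x \<in> S. h x \<noteq> 0}"

definition tw_mul :: "'g groupoid \<Rightarrow> ('g \<times> 'g \<Rightarrow> 'r::comm_ring_1) \<Rightarrow> 'g \<times> 'r \<Rightarrow> 'g \<times> 'r \<Rightarrow> 'g \<times> 'r" where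
  "tw_mul G \<sigma> e e' = (gmul G (fst e) (fst e'), \<sigma> (fst e, fst e') * snd e * snd e')"

definition tw_inv :: "'g groupoid \<Rightarrow> ('g \<times> 'g \<Rightarrow> 'r::comm_ring_1) \<Rightarrow> 'g \<times> 'r \<Rightarrow> 'g \<times> 'r" where
  "tw_inv G \<sigma> e = (ginv G (fst e), uinv (\<sigma> (fst e, ginv G (fst e))) * uinv (snd e))"

text \<open>Elements of A_R(G; G \<times>_\<sigma> T) are functions on 'g \<times> 'r that vanish off G \<times> T.\<close>
definition A_twist :: "('g::topological_space) groupoid \<Rightarrow> ('r::comm_ring_1) set \<Rightarrow> ('g \<times> 'r \<Rightarrow> 'r) set" where
  "A_twist G T = {f.
     (\<forall>g z. z \<notin> T \<longrightarrow> f (g, z) = 0) \<and>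
     (\<forall>z\<in>T. locally_constant_on UNIV (\<lambda>g. f (g, z))) \<and>
     (\<forall>z\<in>T. \<forall>g. \<forall>w\<in>T. f (g, z * w) = z * f (g, w)) \<and>
     compact (closure {g. \<exists>z\<in>T. f (g, z) \<noteq> 0})}"

definition conv_twist ::
  "'g groupoid \<Rightarrow> ('r::comm_ring_1) set \<Rightarrow> ('g \<times> 'g \<Rightarrow> 'r) \<Rightarrow> ('g \<times> 'r \<Rightarrow> 'r) \<Rightarrow> ('g \<times> 'r \<Rightarrow> 'r) \<Rightarrow> 'g \<times> 'r \<Rightarrow> 'r" where
  "conv_twist G T \<sigma> f h e = (if snd e \<in> T then
      finsum (\<lambda>c. f (tw_mul G \<sigma> e (c, 1)) * h (tw_inv G \<sigma> (c, 1)))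
             {c. rng G c = src G (fst e)}
    else 0)"

definition star_twist ::
  "'g groupoid \<Rightarrow> ('r::comm_ring_1) set \<Rightarrow> ('g \<times> 'g \<Rightarrow> 'r) \<Rightarrow> ('r \<Rightarrow> 'r) \<Rightarrow> ('g \<times> 'r \<Rightarrow> 'r) \<Rightarrow> 'g \<times> 'r \<Rightarrow> 'r" where
  "star_twist G T \<sigma> bar f e = (if snd e \<in> T then bar (f (tw_inv G \<sigma> e)) else 0)"

definition A_cocycle :: "('g::topological_space) groupoid \<Rightarrow> ('g \<Rightarrow> 'r::comm_ring_1) set" where
  "A_cocycle G = {f. locally_constant_on UNIV f \<and> compact (closure {g. f g \<noteq> 0})}"

definition conv_cocycle ::
  "'g groupoid \<Rightarrow> ('g \<times> 'g \<Rightarrow> 'r::comm_ring_1) \<Rightarrow> ('g \<Rightarrow> 'r) \<Rightarrow> ('g \<Rightarrow> 'r) \<Rightarrow> 'g \<Rightarrow> 'r" where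
  "conv_cocycle G \<omega> f h g =
     finsum (\<lambda>(a, b). \<omega> (a, b) * f a * h b) {(a, b). src G a = rng G b \<and> gmul G a b = g}"

definition star_cocycle ::
  "'g groupoid \<Rightarrow> ('g \<times> 'g \<Rightarrow> 'r::comm_ring_1) \<Rightarrow> ('r \<Rightarrow> 'r) \<Rightarrow> ('g \<Rightarrow> 'r) \<Rightarrow> 'g \<Rightarrow> 'r" where
  "star_cocycle G \<omega> bar f g = uinv (\<omega> (g, ginv G g)) * bar (f (ginv G g))"

definition T_inverse_involution :: "('r::comm_ring_1) set \<Rightarrow> ('r \<Rightarrow> 'r) \<Rightarrow> bool" where
  "T_inverse_involution T bar \<longleftrightarrow>
     (\<forall>a b. bar (a + b) = bar a + bar b) \<and>
     (\<forall>a b. bar (a * b) = bar b * bar a) \<and>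
     bar 1 = 1 \<and>
     (\<forall>a. bar (bar a) = a) \<and>
     (\<forall>z\<in>T. bar z = uinv z)"

end

theory Submission
  imports Defs
begin

lemma uinv_eq:
  fixes x y :: "'r::comm_ring_1"
  assumes "x * y = 1" shows "uinv x = y"
  unfolding uinv_def
proof (rule the_equality)
  show "x * y = 1" by fact
  fix y' assume "x * y' = 1"
  then have "y' = y' * (x * y)" using assms by simp
  also have "\<dots> = y * (x * y')" by (simp add: algebra_simps)
  finally show "y' = y" using \<open>x * y' = 1\<close> by simp
qed

lemma uinv_one: "uinv (1::'r::comm_ring_1) = 1"
  by (rule uinv_eq) simp

lemma uinv_T:
  fixes T :: "'r::comm_ring_1 set"
  assumes "subgroup_of_units T" "z \<in> T"
  shows "z * uinv z = 1" "uinv z \<in> T" "uinv (uinv z) = z"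
proof -
  obtain b where b: "b \<in> T" "z * b = 1" using assms unfolding subgroup_of_units_def by blast
  then have u: "uinv z = b" by (rule_tac uinv_eq) simp
  show "z * uinv z = 1" "uinv z \<in> T" using u b by auto
  show "uinv (uinv z) = z" using u b by (intro uinv_eq) (simp add: mult.commute)
qed

lemma gax:
  assumes "groupoid_axioms G"
  shows "\<And>a b. src G a = rng G b \<Longrightarrow> rng G (gmul G a b) = rng G a"
    "\<And>a b. src G a = rng G b \<Longrightarrow> src G (gmul G a b) = src G b"
    "\<And>a b c. src G a = rng G b \<Longrightarrow> src G b = rng G c \<Longrightarrow>
        gmul G (gmul G a b) c = gmul G a (gmul G b c)"
    "\<And>a. src G (rng G a) = rng G a" "\<And>a. rng G (src G a) = src G a"
    "\<And>a. gmul G (rng G a) a = a" "\<And>a. gmul G a (src G a) = a"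
    "\<And>a. src G (ginv G a) = rng G a" "\<And>a. rng G (ginv G a) = src G a"
    "\<And>a. gmul G a (ginv G a) = rng G a" "\<And>a. gmul G (ginv G a) a = src G a"
  using assms unfolding groupoid_axioms_def by blast+

lemma ginv_ginv:
  assumes ax: "groupoid_axioms G"
  shows "ginv G (ginv G b) = b"
proof -
  note A = gax[OF ax]
  let ?m = "gmul G" and ?i = "ginv G" and ?r = "rng G" and ?s = "src G"
  have 1: "?i (?i b) = ?m (?i (?i b)) (?s b)" using A(7)[of "?i (?i b)"] A(8) A(9) by simp
  have 2: "?m (?i (?i b)) (?s b) = ?m (?i (?i b)) (?m (?i b) b)" using A(11) by simp
  have 3: "?m (?i (?i b)) (?m (?i b) b) = ?m (?m (?i (?i b)) (?i b)) b"
    using A(3)[of "?i (?i b)" "?i b" b] A(8,9) by simp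
  have 4: "?m (?i (?i b)) (?i b) = ?r b" using A(11)[of "?i b"] A(8) by simp
  show ?thesis using 1 2 3 4 A(6) by simp
qed

lemma twist_hom:
  assumes "f \<in> A_twist G T" "z \<in> T" "1 \<in> T"
  shows "f (g, z) = z * f (g, 1)"
proof -
  have "\<forall>z\<in>T. \<forall>g. \<forall>w\<in>T. f (g, z * w) = z * f (g, w)"
    using assms(1) unfolding A_twist_def by blast
  then have "f (g, z * 1) = z * f (g, 1)" using assms(2,3) by blast
  then show ?thesis by simp
qed

theorem corollary4p25:
  fixes G :: "('g::t2_space) groupoid"
    and T :: "('r::comm_ring_1) set"
    and \<sigma> :: "'g \<times> 'g \<Rightarrow> 'r"
  assumes "ample_hausdorff_groupoid G"
    and "subgroup_of_units T"
    and "continuous_2_cocycle G T \<sigma>"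
  shows "\<exists>\<Psi>. bij_betw \<Psi> (A_twist G T) (A_cocycle G) \<and>
     (\<forall>f\<in>A_twist G T. \<forall>g. \<Psi> f g = f (g, 1)) \<and>
     (\<forall>f\<in>A_twist G T. \<forall>h\<in>A_twist G T.
        \<Psi> (\<lambda>e. f e + h e) = (\<lambda>g. \<Psi> f g + \<Psi> h g) \<and>
        \<Psi> (conv_twist G T \<sigma> f h) = conv_cocycle G (\<lambda>p. uinv (\<sigma> p)) (\<Psi> f) (\<Psi> h)) \<and>
     (\<forall>c. \<forall>f\<in>A_twist G T. \<Psi> (\<lambda>e. c * f e) = (\<lambda>g. c * \<Psi> f g)) \<and>
     (\<forall>bar. T_inverse_involution T bar \<longrightarrow>
        (\<forall>f\<in>A_twist G T. \<Psi> (star_twist G T \<sigma> bar f) = star_cocycle G (\<lambda>p. uinv (\<sigma> p)) bar (\<Psi> f)))"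
proof -
  have ax: "groupoid_axioms G" using assms(1)
    unfolding ample_hausdorff_groupoid_def topological_groupoid_def by blast
  note A = gax[OF ax]
  have T1: "1 \<in> T" using assms(2) unfolding subgroup_of_units_def by blast
  note U = uinv_T[OF assms(2)]
  have sT: "\<And>a b. src G a = rng G b \<Longrightarrow> \<sigma> (a, b) \<in> T"
    using assms(3) unfolding continuous_2_cocycle_def composable_def by blast
  have coc: "\<And>a b c. src G a = rng G b \<Longrightarrow> src G b = rng G c \<Longrightarrow>
        \<sigma> (a, b) * \<sigma> (gmul G a b, c) = \<sigma> (a, gmul G b c) * \<sigma> (b, c)"
    and coc1: "\<And>g. \<sigma> (g, src G g) = 1"
    using assms(3) unfolding continuous_2_cocycle_def by blast+
  define \<Psi> where "\<Psi> = (\<lambda>(f::'g \<times> 'r \<Rightarrow> 'r) g. f (g, 1))"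
  have bij: "bij_betw \<Psi> (A_twist G T) (A_cocycle G)"
  proof (rule bij_betw_byWitness[where f' = "\<lambda>h e. if snd e \<in> T then snd e * h (fst e) else 0"])
    show "\<forall>f\<in>A_twist G T. (\<lambda>e. if snd e \<in> T then snd e * \<Psi> f (fst e) else 0) = f"
    proof (intro ballI ext)
      fix f e assume f: "f \<in> A_twist G T"
      show "(if snd e \<in> T then snd e * \<Psi> f (fst e) else 0) = f e"
        using f twist_hom[OF f _ T1, of "snd e" "fst e"] unfolding \<Psi>_def A_twist_def
        by (cases e) auto
    qed
    show "\<forall>h\<in>A_cocycle G. \<Psi> (\<lambda>e. if snd e \<in> T then snd e * h (fst e) else 0) = h"
      using T1 unfolding \<Psi>_def by auto
    show "\<Psi> ` A_twist G T \<subseteq> A_cocycle G"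
    proof
      fix F assume "F \<in> \<Psi> ` A_twist G T"
      then obtain f where f: "f \<in> A_twist G T" and F: "F = (\<lambda>g. f (g, 1))"
        unfolding \<Psi>_def by auto
      have lc: "locally_constant_on UNIV F" using f T1 unfolding F A_twist_def by auto
      have cS: "compact (closure {g. \<exists>z\<in>T. f (g, z) \<noteq> 0})" using f unfolding A_twist_def by auto
      have sub: "closure {g. F g \<noteq> 0} \<subseteq> closure {g. \<exists>z\<in>T. f (g, z) \<noteq> 0}"
        by (rule closure_mono) (use T1 F in auto)
      have "compact (closure {g. \<exists>z\<in>T. f (g, z) \<noteq> 0} \<inter> closure {g. F g \<noteq> 0})"
        by (rule compact_Int_closed[OF cS]) simp
      moreover have "closure {g. \<exists>z\<in>T. f (g, z) \<noteq> 0} \<inter> closure {g. F g \<noteq> 0} = closure {g. F g \<noteq> 0}"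
        using sub by blast
      ultimately show "F \<in> A_cocycle G" using lc unfolding A_cocycle_def by simp
    qed
    show "(\<lambda>h e. if snd e \<in> T then snd e * h (fst e) else 0) ` A_cocycle G \<subseteq> A_twist G T"
    proof
      fix f assume "f \<in> (\<lambda>h e. if snd e \<in> T then snd e * h (fst e) else 0) ` A_cocycle G"
      then obtain h where h: "h \<in> A_cocycle G" and f: "f = (\<lambda>e. if snd e \<in> T then snd e * h (fst e) else 0)"
        by auto
      have lch: "locally_constant_on UNIV h" and ch: "compact (closure {g. h g \<noteq> 0})"
        using h unfolding A_cocycle_def by auto
      have zero: "\<forall>g z. z \<notin> T \<longrightarrow> f (g, z) = 0" unfolding f by simp
      have "{g. \<exists>z\<in>T. f (g, z) \<noteq> 0} = {g. h g \<noteq> 0}"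
        using T1 unfolding f by force
      moreover have "\<forall>z\<in>T. locally_constant_on UNIV (\<lambda>g. f (g, z))"
        unfolding locally_constant_on_def
      proof (intro ballI)
        fix z :: 'r and x :: 'g assume z: "z \<in> T"
        obtain U where U: "open U" "x \<in> U" "\<forall>y\<in>U \<inter> UNIV. h y = h x"
          using lch unfolding locally_constant_on_def by blast
        show "\<exists>U. open U \<and> x \<in> U \<and> (\<forall>y\<in>U \<inter> UNIV. f (y, z) = f (x, z))"
        proof (intro exI[of _ U] conjI)
          show "open U" "x \<in> U" by (fact U(1), fact U(2))
          show "\<forall>y\<in>U \<inter> UNIV. f (y, z) = f (x, z)" using U(3) z unfolding f by simp
        qed
      qed
      moreover have "\<forall>z\<in>T. \<forall>g. \<forall>w\<in>T. f (g, z * w) = z * f (g, w)"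
        using assms(2) unfolding f subgroup_of_units_def by (simp add: mult.assoc)
      ultimately show "f \<in> A_twist G T" using ch zero unfolding A_twist_def mem_Collect_eq by simp
    qed
  qed
  have conv: "\<Psi> (conv_twist G T \<sigma> f h) = conv_cocycle G (\<lambda>p. uinv (\<sigma> p)) (\<Psi> f) (\<Psi> h)"
    if f: "f \<in> A_twist G T" and h: "h \<in> A_twist G T" for f h
  proof
    fix g
    define F where "F = (\<lambda>c. f (tw_mul G \<sigma> (g, 1) (c, 1)) * h (tw_inv G \<sigma> (c, 1)))"
    define H where "H = (\<lambda>(a, b). uinv (\<sigma> (a, b)) * \<Psi> f a * \<Psi> h b)"
    define S1 where "S1 = {c. rng G c = src G g}"
    define S2 where "S2 = {(a, b). src G a = rng G b \<and> gmul G a b = g}"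
    define \<phi> where "\<phi> = (\<lambda>c. (gmul G g c, ginv G c))"
    have key: "F c = H (\<phi> c)" if c: "c \<in> S1" for c
    proof -
      have c': "src G g = rng G c" using c unfolding S1_def by simp
      let ?s = "\<sigma> (g, c)" and ?u = "\<sigma> (gmul G g c, ginv G c)" and ?v = "\<sigma> (c, ginv G c)"
      have sTs: "?s \<in> T" using sT c' by simp
      have vT: "?v \<in> T" using sT A(9) by simp
      have uT: "?u \<in> T" using sT A(2)[OF c'] A(9) by simp
      have "?s * ?u = \<sigma> (g, gmul G c (ginv G c)) * ?v"
        using coc[of g c "ginv G c"] c' A(9) by simp
      also have "\<sigma> (g, gmul G c (ginv G c)) = 1" using A(10) coc1[of g] c' by simp
      finally have su: "?s * ?u = ?v" by simp
      have "?u * (?s * uinv ?v) = 1" using su U(1)[OF vT] by (metis mult.assoc mult.commute)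
      then have ui: "uinv ?u = ?s * uinv ?v" by (rule uinv_eq)
      have "F c = f (gmul G g c, ?s) * h (ginv G c, uinv ?v)"
        unfolding F_def tw_mul_def tw_inv_def by (simp add: uinv_one)
      also have "\<dots> = ?s * f (gmul G g c, 1) * (uinv ?v * h (ginv G c, 1))"
        using twist_hom[OF f sTs T1] twist_hom[OF h U(2)[OF vT] T1] by simp
      also have "\<dots> = uinv ?u * \<Psi> f (gmul G g c) * \<Psi> h (ginv G c)"
        unfolding ui \<Psi>_def by (simp add: algebra_simps)
      finally show ?thesis unfolding H_def \<phi>_def by simp
    qed
    have bij2: "bij_betw \<phi> {c \<in> S1. F c \<noteq> 0} {p \<in> S2. H p \<noteq> 0}"
    proof (rule bij_betw_byWitness[where f' = "\<lambda>p. ginv G (snd p)"])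
      show "\<forall>c\<in>{c \<in> S1. F c \<noteq> 0}. ginv G (snd (\<phi> c)) = c"
        unfolding \<phi>_def using ginv_ginv[OF ax] by simp
      have inv2: "\<phi> (ginv G (snd p)) = p" if p: "p \<in> S2" for p
      proof -
        obtain a b where ab: "p = (a, b)" "src G a = rng G b" "gmul G a b = g"
          using p unfolding S2_def by auto
        have "gmul G g (ginv G b) = gmul G a (gmul G b (ginv G b))"
          using A(3)[of a b "ginv G b"] ab A(9) by simp
        also have "\<dots> = a" using A(10)[of b] A(7)[of a] ab(2) by simp
        finally show ?thesis unfolding \<phi>_def using ab ginv_ginv[OF ax] by simp
      qed
      show "\<forall>p\<in>{p \<in> S2. H p \<noteq> 0}. \<phi> (ginv G (snd p)) = p" using inv2 by blast
      show "\<phi> ` {c \<in> S1. F c \<noteq> 0} \<subseteq> {p \<in> S2. H p \<noteq> 0}"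
      proof
        fix p assume "p \<in> \<phi> ` {c \<in> S1. F c \<noteq> 0}"
        then obtain c where c: "c \<in> S1" "F c \<noteq> 0" "p = \<phi> c" by auto
        have c': "src G g = rng G c" using c unfolding S1_def by simp
        have "src G (gmul G g c) = rng G (ginv G c)" using A(2)[OF c'] A(9) by simp
        moreover have "gmul G (gmul G g c) (ginv G c) = g"
          using A(3)[of g c "ginv G c", OF c'] A(9)[of c] A(10)[of c] A(7)[of g] c' by simp
        ultimately have "p \<in> S2" unfolding S2_def c(3) \<phi>_def by simp
        then show "p \<in> {p \<in> S2. H p \<noteq> 0}" using key[OF c(1)] c by simp
      qed
      show "(\<lambda>p. ginv G (snd p)) ` {p \<in> S2. H p \<noteq> 0} \<subseteq> {c \<in> S1. F c \<noteq> 0}"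
      proof
        fix c assume "c \<in> (\<lambda>p. ginv G (snd p)) ` {p \<in> S2. H p \<noteq> 0}"
        then obtain p where p: "p \<in> S2" "H p \<noteq> 0" "c = ginv G (snd p)" by auto
        obtain a b where ab: "p = (a, b)" "src G a = rng G b" "gmul G a b = g"
          using p unfolding S2_def by auto
        have "rng G c = src G g" using p(3) ab A(9)[of b] A(2)[OF ab(2)] by simp
        then have cS: "c \<in> S1" unfolding S1_def by simp
        have "F c = H p" using key[OF cS] inv2[OF p(1)] p(3) by simp
        then show "c \<in> {c \<in> S1. F c \<noteq> 0}" using cS p(2) by simp
      qed
    qed
    have "\<Psi> (conv_twist G T \<sigma> f h) g = finsum F S1"
      unfolding \<Psi>_def conv_twist_def F_def S1_def using T1 by simp
    also have "\<dots> = sum (\<lambda>c. H (\<phi> c)) {c \<in> S1. F c \<noteq> 0}"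
      unfolding finsum_def by (rule sum.cong) (auto simp: key)
    also have "\<dots> = sum H {p \<in> S2. H p \<noteq> 0}"
      by (rule sum.reindex_bij_betw[OF bij2])
    also have "\<dots> = conv_cocycle G (\<lambda>p. uinv (\<sigma> p)) (\<Psi> f) (\<Psi> h) g"
      unfolding conv_cocycle_def finsum_def H_def S2_def by simp
    finally show "\<Psi> (conv_twist G T \<sigma> f h) g = conv_cocycle G (\<lambda>p. uinv (\<sigma> p)) (\<Psi> f) (\<Psi> h) g" .
  qed
  have star: "\<Psi> (star_twist G T \<sigma> bar f) = star_cocycle G (\<lambda>p. uinv (\<sigma> p)) bar (\<Psi> f)"
    if bar: "T_inverse_involution T bar" and f: "f \<in> A_twist G T" for bar f
  proof
    fix g
    let ?v = "\<sigma> (g, ginv G g)"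
    have vT: "?v \<in> T" using sT A(9) by simp
    have bm: "bar (a * b) = bar b * bar a" and bT: "\<And>z. z \<in> T \<Longrightarrow> bar z = uinv z" for a b
      using bar unfolding T_inverse_involution_def by blast+
    have "\<Psi> (star_twist G T \<sigma> bar f) g = bar (f (ginv G g, uinv ?v))"
      unfolding \<Psi>_def star_twist_def tw_inv_def using T1 by (simp add: uinv_one)
    also have "\<dots> = bar (uinv ?v * f (ginv G g, 1))"
      using twist_hom[OF f U(2)[OF vT] T1] by simp
    also have "\<dots> = bar (f (ginv G g, 1)) * ?v"
      using bm bT[OF U(2)[OF vT]] U(3)[OF vT] by simp
    also have "\<dots> = star_cocycle G (\<lambda>p. uinv (\<sigma> p)) bar (\<Psi> f) g"
      unfolding star_cocycle_def \<Psi>_def using U(3)[OF vT] by (simp add: mult.commute)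
    finally show "\<Psi> (star_twist G T \<sigma> bar f) g = star_cocycle G (\<lambda>p. uinv (\<sigma> p)) bar (\<Psi> f) g" .
  qed
  show ?thesis
    apply (rule exI[of _ \<Psi>])
    using bij conv star by (auto simp: \<Psi>_def)
qed

end
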